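(* Let $\beta_{\mathtt{H}},\beta_{\mathtt{L}},\gamma_{\mathtt{H}},\gamma_{\mathtt{L}}>0$ with $\beta_{\mathtt{H}}/\gamma_{\mathtt{H}}>\beta_{\mathtt{L}}/\gamma_{\mathtt{L}}$ and $\beta_{\mathtt{H}}>\beta_{\mathtt{L}}$, let $q_{\mathtt{HL}},q_{\mathtt{LH}}\ge 0$, $\alpha\in(0,1)$, and fix $z_{\mathtt{S}}\in[0,1]$. Set $\hat\beta_{\mathtt{Q}}:=\beta_{\mathtt{Q}}(\alpha z_{\mathtt{S}}+1-z_{\mathtt{S}})$ for $\mathtt{Q}\in\{\mathtt{H},\mathtt{L}\}$ and consider, on $\{(\mathtt{I}_{\mathtt{H}},\mathtt{I}_{\mathtt{L}})\in[0,1]^2:\mathtt{I}_{\mathtt{H}}+\mathtt{I}_{\mathtt{L}}\le 1\}$ (with $\mathtt{S}=1-\mathtt{I}_{\mathtt{H}}-\mathtt{I}_{\mathtt{L}}$), the dynamics \begin{align*} \dot{\mathtt{I}}_{\mathtt{H}}&=\hat\beta_{\mathtt{H}}\mathtt{I}_{\mathtt{H}}(1-\mathtt{I}_{\mathtt{H}}-\mathtt{I}_{\mathtt{L}})+q_{\mathtt{LH}}\mathtt{I}_{\mathtt{L}}-(q_{\mathtt{HL}}+\gamma_{\mathtt{H}})\mathtt{I}_{\mathtt{H}},\\ \dot{\mathtt{I}}_{\mathtt{L}}&=\hat\beta_{\mathtt{L}}\mathtt{I}_{\mathtt{L}}(1-\mathtt{I}_{\mathtt{H}}-\mathtt{I}_{\mathtt{L}})+q_{\mathtt{HL}}\mathtt{I}_{\mathtt{H}}-(q_{\mathtt{LH}}+\gamma_{\mathtt{L}})\mathtt{I}_{\mathtt{L}}.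 \end{align*} Let $B=\mathrm{diag}(\hat\beta_{\mathtt{H}},\hat\beta_{\mathtt{L}})$, $D=\mathrm{diag}(\gamma_{\mathtt{H}}+q_{\mathtt{HL}},\gamma_{\mathtt{L}}+q_{\mathtt{LH}})$ and $M=\begin{bmatrix}0&q_{\mathtt{LH}}\\ q_{\mathtt{HL}}&0\end{bmatrix}$. Then the disease-free equilibrium $(\mathtt{S},\mathtt{I}_{\mathtt{H}},\mathtt{I}_{\mathtt{L}})=(1,0,0)$ is globally asymptotically stable if and only if $\rho(D^{-1}(B+M))\le 1$.
   Context: $\rho(A)$ denotes the spectral radius of a square matrix $A$ (maximum modulus of its eigenvalues). The model is a bi-virus SIS epidemic with strains $\mathtt{H}$ and $\mathtt{L}$: $\mathtt{I}_{\mathtt{H}},\mathtt{I}_{\mathtt{L}}$ are fractions infected by each strain, $\beta$'s transmission rates, $\gamma$'s recovery rates, $q_{\mathtt{HL}},q_{\mathtt{LH}}$ mutation rates between strains, $z_{\mathtt{S}}$ the fraction of susceptibles adopting protection, which scales infection rates by $\alpha$. *)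

theory Defs
  imports "HOL-Analysis.Analysis"
begin

definition cmat :: "real^'n^'n \<Rightarrow> complex^'n^'n" where
  "cmat A = (\<chi> i j. complex_of_real (A $ i $ j))"

definition spectral_radius :: "real^'n^'n \<Rightarrow> real" where
  "spectral_radius A = Max (cmod ` {l::complex. det (cmat A - mat l) = 0})"

text \<open>2x2 matrices indexed by type 2; index 1 is strain H, index 2 is strain L.\<close>
definition diag2 :: "real \<Rightarrow> real \<Rightarrow> real^2^2" where
  "diag2 a b = (\<chi> i j. if i = j then (if i = 1 then a else b) else 0)"

definition offdiag2 :: "real \<Rightarrow> real \<Rightarrow> real^2^2" where
  "offdiag2 a b = (\<chi> i j. if i = j then 0 else (if i = 1 then a else b))"

definition bivirus_field ::
  "real \<Rightarrow> real \<Rightarrow> real \<Rightarrow> real \<Rightarrow> real \<Rightarrow> real \<Rightarrow> real \<times> real \<Rightarrow> real \<times> real" where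
  "bivirus_field bH bL gH gL qHL qLH = (\<lambda>(iH, iL).
     (bH * iH * (1 - iH - iL) + qLH * iL - (qHL + gH) * iH,
      bL * iL * (1 - iH - iL) + qHL * iH - (qLH + gL) * iL))"

definition simplex2 :: "(real \<times> real) set" where
  "simplex2 = {(iH, iL). 0 \<le> iH \<and> iH \<le> 1 \<and> 0 \<le> iL \<and> iL \<le> 1 \<and> iH + iL \<le> 1}"

definition is_solution :: "('a::real_normed_vector \<Rightarrow> 'a) \<Rightarrow> 'a set \<Rightarrow> (real \<Rightarrow> 'a) \<Rightarrow> bool" where
  "is_solution f X x \<longleftrightarrow> x 0 \<in> X \<and>
     (\<forall>t\<ge>0. (x has_vector_derivative f (x t)) (at t within {0..}))"

definition globally_asymptotically_stable ::
  "('a::real_normed_vector \<Rightarrow> 'a) \<Rightarrow> 'a set \<Rightarrow> 'a \<Rightarrow> bool" where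
  "globally_asymptotically_stable f X e \<longleftrightarrow>
     e \<in> X \<and> f e = 0 \<and>
     (\<forall>\<epsilon>>0. \<exists>\<delta>>0. \<forall>x. is_solution f X x \<and> dist (x 0) e < \<delta> \<longrightarrow>
         (\<forall>t\<ge>0. dist (x t) e < \<epsilon>)) \<and>
     (\<forall>x. is_solution f X x \<longrightarrow> (x \<longlongrightarrow> e) at_top)"

end

theory Submission
  imports Defs
begin


lemma quad_aux:
  fixes a b c d p q l :: "'a::comm_ring"
  assumes "p*q = a*d - b*c" "p + q = a + d"
  shows "(a - l)*(d - l) - b*c = (l-p)*(l-q)"
proof -
  have "(l-p)*(l-q) = l*l - l*(p+q) + p*q" by (simp add: algebra_simps)
  also have "\<dots> = (a - l)*(d - l) - b*c" unfolding assms by (simp add: algebra_simps)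
  finally show ?thesis by simp
qed

lemma specrad2:
  fixes N :: "real^2^2"
  defines "T \<equiv> N$1$1 + N$2$2" and "Dl \<equiv> (N$1$1 - N$2$2)^2 + 4 * (N$1$2 * N$2$1)"
  assumes "N$1$2 * N$2$1 \<ge> 0" "T \<ge> 0"
  shows "spectral_radius N = (T + sqrt Dl) / 2"
proof -
  define l1 where "l1 = (T + sqrt Dl)/2"
  define l2 where "l2 = (T - sqrt Dl)/2"
  have Dl0: "Dl \<ge> 0" using assms(3) unfolding Dl_def by simp
  have sq: "sqrt Dl * sqrt Dl = Dl" using Dl0 by simp
  have det: "det (cmat N - mat l) = (l - of_real l1) * (l - of_real l2)" for l
  proof -
    have "det (cmat N - mat l) = (of_real (N$1$1) - l) * (of_real (N$2$2) - l) - of_real (N$1$2) * of_real (N$2$1)"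
      by (simp add: det_2 cmat_def mat_def)
    also have "\<dots> = (l - of_real l1) * (l - of_real l2)"
    proof -
      have "l1 * l2 = N$1$1 * N$2$2 - N$1$2 * N$2$1"
        unfolding l1_def l2_def using sq unfolding Dl_def T_def by (simp add: field_simps power2_eq_square)
      moreover have "l1 + l2 = T" unfolding l1_def l2_def by (simp add: field_simps)
      ultimately have "complex_of_real (l1 * l2) = of_real (N$1$1 * N$2$2 - N$1$2 * N$2$1)"
         "complex_of_real (l1 + l2) = of_real (N$1$1 + N$2$2)" by (simp_all add: T_def)
      then show ?thesis by (intro quad_aux) (simp_all add: of_real_mult[symmetric] of_real_add[symmetric] del: of_real_mult of_real_add)
    qed
    finally show ?thesis .
  qed
  have set: "{l::complex. det (cmat N - mat l) = 0} = {of_real l1, of_real l2}"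
    unfolding det by auto
  have "\<bar>l2\<bar> \<le> l1" unfolding l1_def l2_def using assms(4) Dl0 by (simp add: abs_if field_simps)
  moreover have "l1 \<ge> 0" unfolding l1_def using assms(4) Dl0 by simp
  ultimately have "Max (cmod ` {of_real l1, of_real l2}) = l1"
    by (simp add: max_def)
  then show ?thesis unfolding spectral_radius_def set l1_def .
qed

lemma matrix_inv_diag2:
  assumes "a \<noteq> 0" "b \<noteq> 0"
  shows "matrix_inv (diag2 a b) = diag2 (1/a) (1/b)"
proof -
  let ?D = "diag2 a b" and ?E = "diag2 (1/a) (1/b)"
  have 1: "?D ** ?E = mat 1" "?E ** ?D = mat 1"
    using assms by (auto simp: matrix_matrix_mult_def diag2_def mat_def vec_eq_iff sum_2 forall_2)
  then have ex: "\<exists>A'. ?D ** A' = mat 1 \<and> A' ** ?D = mat 1" by blast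
  have "?D ** matrix_inv ?D = mat 1 \<and> matrix_inv ?D ** ?D = mat 1"
    unfolding matrix_inv_def by (rule someI_ex[OF ex])
  then have "matrix_inv ?D = matrix_inv ?D ** (?D ** ?E)" "matrix_inv ?D ** ?D = mat 1"
    using 1 by (simp_all add: matrix_mul_rid)
  then show ?thesis by (metis matrix_mul_assoc matrix_mul_lid)
qed

lemma rho_le1_iff:
  fixes p s r :: real
  assumes "p \<ge> 0" "s \<ge> 0" "r \<ge> 0"
  shows "(p + s + sqrt ((p-s)^2 + 4*r))/2 \<le> 1 \<longleftrightarrow> p \<le> 1 \<and> s \<le> 1 \<and> r \<le> (1-p)*(1-s)"
proof -
  have "(p + s + sqrt ((p-s)^2 + 4*r))/2 \<le> 1 \<longleftrightarrow> sqrt ((p-s)^2 + 4*r) \<le> 2 - p - s" by auto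
  also have "\<dots> \<longleftrightarrow> 0 \<le> 2 - p - s \<and> (p-s)^2 + 4*r \<le> (2-p-s)^2"
  proof
    assume h: "sqrt ((p-s)^2 + 4*r) \<le> 2 - p - s"
    have X: "(p-s)^2 + 4*r \<ge> 0" using assms by simp
    have "0 \<le> 2 - p - s" using h real_sqrt_ge_zero[OF X] by linarith
    moreover have "(sqrt ((p-s)^2 + 4*r))^2 \<le> (2-p-s)^2"
      using h real_sqrt_ge_zero[OF X] by (intro power_mono) auto
    ultimately show "0 \<le> 2 - p - s \<and> (p-s)^2 + 4*r \<le> (2-p-s)^2" using X by simp
  next
    assume h: "0 \<le> 2 - p - s \<and> (p-s)^2 + 4*r \<le> (2-p-s)^2"
    then have "sqrt ((p-s)^2 + 4*r) \<le> sqrt ((2-p-s)^2)" by (intro real_sqrt_le_mono) auto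
    then show "sqrt ((p-s)^2 + 4*r) \<le> 2 - p - s" using h by simp
  qed
  also have "\<dots> \<longleftrightarrow> 0 \<le> 2 - p - s \<and> r \<le> (1-p)*(1-s)"
    by (auto simp: power2_eq_square algebra_simps)
  also have "\<dots> \<longleftrightarrow> p \<le> 1 \<and> s \<le> 1 \<and> r \<le> (1-p)*(1-s)"
  proof (intro iffI conjI)
    assume h: "0 \<le> 2 - p - s \<and> r \<le> (1-p)*(1-s)"
    then have "(1-p)*(1-s) \<ge> 0" using assms by linarith
    then show "p \<le> 1" "s \<le> 1" using h by (auto simp: zero_le_mult_iff)
    show "r \<le> (1-p)*(1-s)" using h by simp
  qed auto
  finally show ?thesis .
qed

lemma specrad_cond:
  fixes dH dL bH bL qLH qHL :: real
  assumes "dH > 0" "dL > 0" "bH \<ge> 0" "bL \<ge> 0" "qLH \<ge> 0" "qHL \<ge> 0"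
  shows "spectral_radius (matrix_inv (diag2 dH dL) ** (diag2 bH bL + offdiag2 qLH qHL)) \<le> 1
    \<longleftrightarrow> bH \<le> dH \<and> bL \<le> dL \<and> qLH*qHL \<le> (dH - bH)*(dL - bL)"
proof -
  define N where "N = matrix_inv (diag2 dH dL) ** (diag2 bH bL + offdiag2 qLH qHL)"
  have N: "N$1$1 = bH/dH" "N$1$2 = qLH/dH" "N$2$1 = qHL/dL" "N$2$2 = bL/dL"
    unfolding N_def matrix_inv_diag2[of dH dL, OF order.strict_implies_not_eq[OF assms(1), symmetric] order.strict_implies_not_eq[OF assms(2), symmetric]]
    by (simp_all add: matrix_matrix_mult_def diag2_def offdiag2_def sum_2)
  have p: "bH/dH \<ge> 0" "bL/dL \<ge> 0" "qLH/dH * (qHL/dL) \<ge> 0" using assms by simp_all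
  have "spectral_radius N = (bH/dH + bL/dL + sqrt ((bH/dH - bL/dL)^2 + 4 * (qLH/dH * (qHL/dL))))/2"
    by (subst specrad2) (use p in \<open>simp_all add: N\<close>)
  then have "spectral_radius N \<le> 1 \<longleftrightarrow> bH/dH \<le> 1 \<and> bL/dL \<le> 1 \<and> qLH/dH * (qHL/dL) \<le> (1 - bH/dH)*(1 - bL/dL)"
    using rho_le1_iff[OF p] by (simp only:)
  also have "\<dots> \<longleftrightarrow> bH \<le> dH \<and> bL \<le> dL \<and> qLH*qHL \<le> (dH - bH)*(dL - bL)"
  proof -
    have "(1 - bH/dH)*(1 - bL/dL) = (dH - bH)*(dL - bL) / (dH*dL)"
      using assms by (simp add: field_simps)
    moreover have "qLH/dH * (qHL/dL) = qLH*qHL/(dH*dL)" by simp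
    moreover have pp: "dH*dL > 0" using assms by simp
    moreover have "qLH*qHL/(dH*dL) \<le> (dH - bH)*(dL - bL) / (dH*dL) \<longleftrightarrow> qLH*qHL \<le> (dH - bH)*(dL - bL)"
      using pp by (simp add: divide_le_cancel)
    ultimately show ?thesis using assms by simp
  qed
  finally show ?thesis unfolding N_def .
qed



lemma endemic:
  fixes bH bL gH gL qHL qLH :: real
  defines "dH \<equiv> gH + qHL" and "dL \<equiv> gL + qLH"
  assumes pos: "bH > 0" "bL > 0" "gH > 0" "gL > 0" "qHL \<ge> 0" "qLH \<ge> 0"
    and ratio: "bH / gH > bL / gL"
    and notP: "\<not> (bH \<le> dH \<and> bL \<le> dL \<and> qLH*qHL \<le> (dH - bH)*(dL - bL))"
  shows "\<exists>e \<in> simplex2. e \<noteq> (0,0) \<and> bivirus_field bH bL gH gL qHL qLH e = (0,0)"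
proof -
  define f where "f = (\<lambda>\<sigma>. (dH - \<sigma>*bH)*(dL - \<sigma>*bL) - qLH*qHL)"
  define ss where "ss = min (dH/bH) (dL/bL)"
  have dpos: "dH > 0" "dL > 0" using pos unfolding dH_def dL_def by auto
  have ss0: "ss > 0" unfolding ss_def using dpos pos by simp
  have "qLH*qHL < dL*dH"
    using pos by (intro mult_strict_mono') (auto simp: dH_def dL_def)
  then have f0: "f 0 > 0" unfolding f_def by (simp add: mult.commute)
  have fs: "f ss \<le> 0"
  proof -
    have "dH - ss*bH = 0 \<or> dL - ss*bL = 0" unfolding ss_def using pos by (auto simp: min_def)
    then show ?thesis unfolding f_def using pos by auto
  qed
  have "continuous_on {0..ss} f" unfolding f_def by (intro continuous_intros)
  then obtain s0 where s0: "0 \<le> s0" "s0 \<le> ss" "f s0 = 0"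
    using IVT2'[of f ss 0 0] f0 fs ss0 by auto
  have s0pos: "s0 > 0" using s0 f0 by (cases "s0 = 0") auto
  define A0 where "A0 = dH - s0*bH"
  define B0 where "B0 = dL - s0*bL"
  have "s0 \<le> dH/bH" "s0 \<le> dL/bL" using s0(2) unfolding ss_def by auto
  then have A0: "A0 \<ge> 0" and B0: "B0 \<ge> 0" using pos unfolding A0_def B0_def by (simp_all add: pos_le_divide_eq)
  have AB: "A0*B0 = qLH*qHL" using s0(3) unfolding f_def A0_def B0_def by simp
  have s1: "s0 < 1"
  proof (rule ccontr)
    assume "\<not> s0 < 1"
    then have "1 \<le> s0" by simp
    have a: "A0 \<le> dH - bH" unfolding A0_def using \<open>1 \<le> s0\<close> pos by (simp add: mult_right_mono)
    have b: "B0 \<le> dL - bL" unfolding B0_def using \<open>1 \<le> s0\<close> pos by (simp add: mult_right_mono)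
    have "A0*B0 \<le> (dH - bH)*(dL - bL)" using a b A0 B0 by (intro mult_mono) auto
    then show False using notP AB a b A0 B0 by auto
  qed
  define w1 where "w1 = qLH + B0"
  define w2 where "w2 = A0 + qHL"
  have w: "w1 \<ge> 0" "w2 \<ge> 0" unfolding w1_def w2_def using A0 B0 pos by auto
  have wne: "w1 + w2 > 0"
  proof (rule ccontr)
    assume "\<not> w1 + w2 > 0"
    then have z: "qLH = 0" "B0 = 0" "A0 = 0" "qHL = 0" using w A0 B0 pos unfolding w1_def w2_def by auto
    then have "gH = s0*bH" "gL = s0*bL" unfolding A0_def B0_def dH_def dL_def by auto
    then have "bH/gH = bL/gL" using s0pos pos by simp
    then show False using ratio by simp
  qed
  define W where "W = w1 + w2"
  define e where "e = ((1 - s0)*w1/W, (1 - s0)*w2/W)"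
  have hw: "(1-s0)*w1/W + (1-s0)*w2/W = 1 - s0"
  proof -
    have "(1-s0)*w1/W + (1-s0)*w2/W = ((1-s0)*W)/W" unfolding W_def by (simp add: add_divide_distrib[symmetric] distrib_left)
    then show ?thesis using wne unfolding W_def by simp
  qed
  have "e \<in> simplex2"
  proof -
    have "(1-s0)*w1/W + (1-s0)*w2/W = 1 - s0" by (rule hw)
    moreover have "(1-s0)*w1/W \<ge> 0" "(1-s0)*w2/W \<ge> 0" unfolding W_def using wne w s1 by auto
    ultimately show ?thesis unfolding simplex2_def e_def using s0pos by auto
  qed
  moreover have "e \<noteq> (0,0)"
  proof
    assume "e = (0,0)"
    then have "(1-s0)*w1/W = 0" "(1-s0)*w2/W = 0" unfolding e_def by (simp_all only: prod.inject)
    then have "(1-s0)*w1/W + (1-s0)*w2/W = 0" by (simp only: add_0_left)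
    moreover have "(1-s0)*w1/W + (1-s0)*w2/W = 1 - s0" by (rule hw)
    ultimately show False using s1 by simp
  qed
  moreover have "bivirus_field bH bL gH gL qHL qLH e = (0,0)"
  proof -
    let ?h = "(1-s0)*w1/W" and ?l = "(1-s0)*w2/W"
    have "?h + ?l = 1 - s0" by (rule hw)
    then have sum: "1 - ?h - ?l = s0" by linarith
    define c where "c = (1-s0)/W"
    have hc: "?h = c*w1" "?l = c*w2" unfolding c_def by simp_all
    have e1: "bH * ?h * (1 - ?h - ?l) + qLH * ?l - (qHL + gH) * ?h = c * (- A0 * w1 + qLH * w2)"
      unfolding sum unfolding A0_def dH_def hc by (simp add: algebra_simps)
    have e2: "bL * ?l * (1 - ?h - ?l) + qHL * ?h - (qLH + gL) * ?l = c * (qHL * w1 - B0 * w2)"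
      unfolding sum unfolding B0_def dL_def hc by (simp add: algebra_simps)
    have "- A0 * w1 + qLH * w2 = 0" "qHL * w1 - B0 * w2 = 0"
      unfolding w1_def w2_def using AB by (simp_all add: algebra_simps)
    then show ?thesis unfolding bivirus_field_def e_def using e1 e2 by simp
  qed
  ultimately show ?thesis by blast
qed



lemma DERIV_maxsq: "((\<lambda>y::real. (max y 0)^2) has_real_derivative 2 * max x 0) (at x)"
proof (cases "x = 0")
  case True
  have "((\<lambda>y. ((max y 0)^2 - (max x 0)^2) / (y - x)) \<longlongrightarrow> 0) (at x)"
  proof (rule tendsto_sandwich[of "\<lambda>y. - \<bar>y\<bar>" _ _ "\<lambda>y. \<bar>y\<bar>"])
    show "\<forall>\<^sub>F y in at x. - \<bar>y\<bar> \<le> ((max y 0)^2 - (max x 0)^2) / (y - x)"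
      using True by (auto simp: max_def power2_eq_square)
    show "\<forall>\<^sub>F y in at x. ((max y 0)^2 - (max x 0)^2) / (y - x) \<le> \<bar>y\<bar>"
      using True by (auto simp: max_def power2_eq_square)
    have "((\<lambda>y::real. \<bar>y\<bar>) \<longlongrightarrow> \<bar>x\<bar>) (at x)" by (intro tendsto_intros)
    then show "((\<lambda>y::real. \<bar>y\<bar>) \<longlongrightarrow> 0) (at x)" using True by simp
    then show "((\<lambda>y::real. - \<bar>y\<bar>) \<longlongrightarrow> 0) (at x)" using tendsto_minus by fastforce
  qed
  then show ?thesis using True by (simp add: has_field_derivative_iff)
next
  case False
  show ?thesis
  proof (cases "x > 0")
    case True
    have "((\<lambda>y::real. y^2) has_real_derivative 2 * x) (at x)"
      by (auto intro!: derivative_eq_intros)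
    then have "((\<lambda>y::real. (max y 0)^2) has_real_derivative 2 * x) (at x)"
      by (rule has_field_derivative_transform_within_open[of _ _ _ "{0<..}"]) (use True in auto)
    then show ?thesis using True by simp
  next
    case False': False
    then have "x < 0" using False by simp
    have "((\<lambda>y::real. 0) has_real_derivative 0) (at x)" by simp
    then have "((\<lambda>y::real. (max y 0)^2) has_real_derivative 0) (at x)"
      by (rule has_field_derivative_transform_within_open[of _ _ _ "{..<0}"]) (use \<open>x<0\<close> in auto)
    then show ?thesis using \<open>x<0\<close> by simp
  qed
qed

lemma mono_deriv:
  fixes f f' :: "real \<Rightarrow> real"
  assumes "0 \<le> a" "a \<le> b"
    and der: "\<And>t. t \<in> {a..b} \<Longrightarrow> (f has_real_derivative f' t) (at t within {0..})"
    and neg: "\<And>t. t \<in> {a..b} \<Longrightarrow> f' t \<le> 0"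
  shows "f b \<le> f a"
proof (rule DERIV_nonpos_imp_decreasing_open[OF assms(2)])
  fix t assume t: "a < t" "t < b"
  then have "t \<in> interior {0..}" using assms(1) by simp
  then have "(f has_real_derivative f' t) (at t)"
    using der[of t] t at_within_interior[of t "{0::real..}"] by simp
  then show "\<exists>y. (f has_real_derivative y) (at t) \<and> y \<le> 0" using neg[of t] t by auto
next
  have "continuous (at t within {a..b}) f" if "t \<in> {a..b}" for t
  proof -
    have "continuous (at t within {0..}) f"
      using der[OF that] by (rule DERIV_continuous)
    then show ?thesis by (rule continuous_within_subset) (use assms(1) in auto)
  qed
  then show "continuous_on {a..b} f" by (simp add: continuous_on_eq_continuous_within)
qed

lemma comp_deriv:
  assumes "(x has_vector_derivative v) F"
  shows "((\<lambda>t. fst (x t)) has_real_derivative fst v) F"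
    "((\<lambda>t. snd (x t)) has_real_derivative snd v) F"
proof -
  have d: "(x has_derivative (\<lambda>h. h *\<^sub>R v)) F" using assms by (simp add: has_vector_derivative_def)
  have e1: "(\<lambda>h. fst (h *\<^sub>R v)) = (*) (fst v)" "(\<lambda>h. snd (h *\<^sub>R v)) = (*) (snd v)"
    by (auto simp: fun_eq_iff mult.commute)
  show "((\<lambda>t. fst (x t)) has_real_derivative fst v) F"
    using has_derivative_fst[OF d] unfolding e1 has_field_derivative_def .
  show "((\<lambda>t. snd (x t)) has_real_derivative snd v) F"
    using has_derivative_snd[OF d] unfolding e1 has_field_derivative_def .
qed



lemma decay_bound:
  fixes W W' g :: "real \<Rightarrow> real" and c K t0 t :: real
  assumes c: "c > 0"
    and der: "\<And>t. t \<ge> 0 \<Longrightarrow> (W has_real_derivative W' t) (at t within {0..})"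
    and ineq: "\<And>t. t \<ge> 0 \<Longrightarrow> W' t \<le> -c*(W t)^2 + g t"
    and gmono: "\<And>s t. 0 \<le> s \<Longrightarrow> s \<le> t \<Longrightarrow> g t \<le> g s"
    and t: "0 \<le> t0" "t0 \<le> t" and K: "W t0 \<le> K" "g t0 \<le> c*K^2" "0 \<le> K"
  shows "W t \<le> K"
proof -
  define U where "U = (\<lambda>\<tau>. (max (W \<tau> - K) 0)^2)"
  have dU: "(U has_real_derivative (2 * max (W \<tau> - K) 0 * W' \<tau>)) (at \<tau> within {0..})" if "\<tau> \<ge> 0" for \<tau>
  proof -
    have "((\<lambda>\<tau>. W \<tau> - K) has_real_derivative W' \<tau>) (at \<tau> within {0..})"
      using der[OF that] by (auto intro!: derivative_eq_intros)
    from DERIV_chain2[OF DERIV_maxsq this] show ?thesis unfolding U_def by simp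
  qed
  have "U t \<le> U t0"
  proof (rule mono_deriv[OF t dU])
    fix \<tau> assume \<tau>: "\<tau> \<in> {t0..t}"
    show "2 * max (W \<tau> - K) 0 * W' \<tau> \<le> 0"
    proof (cases "W \<tau> \<le> K")
      case True then show ?thesis by simp
    next
      case False
      then have "K^2 \<le> (W \<tau>)^2" using K by (intro power_mono) auto
      then have "-c*(W \<tau>)^2 \<le> -c*K^2" using c by simp
      moreover have "g \<tau> \<le> g t0" using gmono[of t0 \<tau>] \<tau> t by auto
      ultimately have "W' \<tau> \<le> 0" using ineq[of \<tau>] \<tau> t K by auto
      moreover have "max (W \<tau> - K) 0 \<ge> 0" by simp
      ultimately show ?thesis by (simp add: mult_nonneg_nonpos)
    qed
  qed (use t in auto)
  moreover have "U t0 = 0" unfolding U_def using K by simp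
  ultimately have "U t \<le> 0" by simp
  then have "max (W t - K) 0 = 0" unfolding U_def by simp
  then show ?thesis by simp
qed

lemma decay_lim:
  fixes W W' g :: "real \<Rightarrow> real" and c :: real
  assumes c: "c > 0"
    and der: "\<And>t. t \<ge> 0 \<Longrightarrow> (W has_real_derivative W' t) (at t within {0..})"
    and ineq: "\<And>t. t \<ge> 0 \<Longrightarrow> W' t \<le> -c*(W t)^2 + g t"
    and gmono: "\<And>s t. 0 \<le> s \<Longrightarrow> s \<le> t \<Longrightarrow> g t \<le> g s"
    and Wnn: "\<And>t. t \<ge> 0 \<Longrightarrow> W t \<ge> 0"
    and glim: "(g \<longlongrightarrow> 0) at_top"
  shows "(W \<longlongrightarrow> 0) at_top"
proof (rule tendstoI)
  fix e :: real assume e: "e > 0"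
  define K where "K = e/2"
  have K0: "K > 0" unfolding K_def using e by simp
  have "\<forall>\<^sub>F t in at_top. dist (g t) 0 < c*K^2/2"
    using glim K0 c by (intro tendstoD) auto
  then obtain T1 where T1: "\<And>t. t \<ge> T1 \<Longrightarrow> \<bar>g t\<bar> < c*K^2/2"
    by (auto simp: eventually_at_top_linorder)
  define T0 where "T0 = max T1 0"
  have T0: "T0 \<ge> 0" "\<And>t. t \<ge> T0 \<Longrightarrow> g t < c*K^2/2"
    unfolding T0_def using T1 by (auto, smt (verit) T1)
  have "\<exists>t1\<ge>T0. W t1 \<le> K"
  proof (rule ccontr)
    assume "\<not> (\<exists>t1\<ge>T0. W t1 \<le> K)"
    then have big: "\<And>t. t \<ge> T0 \<Longrightarrow> W t > K" by force
    define Z where "Z = (\<lambda>t. W t + (c*K^2/2) * t)"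
    define t where "t = T0 + 2 * W T0 / (c*K^2)"
    have tT: "T0 \<le> t" unfolding t_def using Wnn[OF T0(1)] c K0 by simp
    have "Z t \<le> Z T0"
    proof (rule mono_deriv[of T0 t Z "\<lambda>\<tau>. W' \<tau> + c*K^2/2"])
      fix \<tau> assume \<tau>: "\<tau> \<in> {T0..t}"
      then have "\<tau> \<ge> 0" using T0 by auto
      show "(Z has_real_derivative W' \<tau> + c*K^2/2) (at \<tau> within {0..})"
        unfolding Z_def using der[OF \<open>\<tau> \<ge> 0\<close>] by (auto intro!: derivative_eq_intros)
      have "K^2 \<le> (W \<tau>)^2" using big[of \<tau>] \<tau> K0 by (intro power_mono) auto
      then have "-c*(W \<tau>)^2 \<le> -c*K^2" using c by simp
      then show "W' \<tau> + c*K^2/2 \<le> 0" using ineq[OF \<open>\<tau> \<ge> 0\<close>] T0(2)[of \<tau>] \<tau> by auto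
    qed (use T0 tT in auto)
    then have "W t \<le> W T0 - (c*K^2/2) * (t - T0)" unfolding Z_def by (simp add: right_diff_distrib)
    also have "\<dots> = 0" unfolding t_def using c K0 by simp
    finally show False using big[OF tT] K0 by simp
  qed
  then obtain t1 where t1: "t1 \<ge> T0" "W t1 \<le> K" by blast
  have cK: "c*K^2 > 0" using c K0 by simp
  have gt1: "g t1 \<le> c*K^2" using T0(2)[of t1] t1 cK by linarith
  have "W t \<le> K" if "t \<ge> t1" for t
    using gt1 c der ineq gmono T0(1) t1 that K0
    by (intro decay_bound[of c W W' g t1 t K]) auto
  moreover have "dist (W t) 0 < e" if "t \<ge> t1" "W t \<le> K" for t
  proof -
    have "W t \<ge> 0" using Wnn[of t] that t1 T0 by simp
    then show ?thesis using that K0 unfolding K_def dist_real_def by simp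
  qed
  ultimately show "\<forall>\<^sub>F t in at_top. dist (W t) 0 < e"
    unfolding eventually_at_top_linorder by blast
qed



lemma field_eq: "bivirus_field bH bL gH gL qHL qLH p =
  (bH * fst p * (1 - fst p - snd p) + qLH * snd p - (qHL + gH) * fst p,
   bL * snd p * (1 - fst p - snd p) + qHL * fst p - (qLH + gL) * snd p)"
  by (cases p) (simp add: bivirus_field_def)

lemma sol_comp_deriv:
  assumes "is_solution (bivirus_field bH bL gH gL qHL qLH) X x" "t \<ge> 0"
  shows "((\<lambda>t. fst (x t)) has_real_derivative
      bH * fst (x t) * (1 - fst (x t) - snd (x t)) + qLH * snd (x t) - (qHL + gH) * fst (x t)) (at t within {0..})"
    "((\<lambda>t. snd (x t)) has_real_derivative
      bL * snd (x t) * (1 - fst (x t) - snd (x t)) + qHL * fst (x t) - (qLH + gL) * snd (x t)) (at t within {0..})"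
  using comp_deriv[of x "bivirus_field bH bL gH gL qHL qLH (x t)" "at t within {0..}"] assms
  unfolding is_solution_def field_eq by auto

lemma bounded_on_Icc:
  fixes h :: "real \<Rightarrow> real"
  assumes "\<And>t. t \<ge> 0 \<Longrightarrow> (h has_real_derivative h' t) (at t within {0..})"
  shows "\<exists>R. \<forall>t\<in>{0..T}. \<bar>h t\<bar> \<le> R"
proof -
  have "continuous (at t within {0..T}) h" if "t \<in> {0..T}" for t
  proof -
    have "continuous (at t within {0..}) h"
      using assms[of t] that by (intro DERIV_continuous) auto
    then show ?thesis by (rule continuous_within_subset) auto
  qed
  then have "continuous_on {0..T} h" by (simp add: continuous_on_eq_continuous_within)
  then have "bounded (h ` {0..T})" by (intro compact_imp_bounded compact_continuous_image) auto
  then show ?thesis unfolding bounded_iff by auto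
qed

lemma key_ineq:
  fixes mH mL h l a K1 q :: real
  assumes "mH \<ge> 0" "mL \<ge> 0" "mH * h = - (mH^2)" "l \<ge> - mL" "\<bar>a\<bar> \<le> K1" "q \<ge> 0"
  shows "2 * mH * (-(a*h + q*l)) \<le> 2*K1*mH^2 + q*(mH^2 + mL^2)"
proof -
  have 1: "-2*mH*a*h = 2*a*mH^2" using assms(3) by (simp add: algebra_simps)
  have "a*mH^2 \<le> K1*mH^2" using assms(5) by (intro mult_right_mono) auto
  then have 2: "-2*mH*a*h \<le> 2*K1*mH^2" using 1 by simp
  have "q*mH*(-l) \<le> q*mH*mL" using assms by (intro mult_left_mono) auto
  moreover have "2*mH*mL \<le> mH^2 + mL^2" using sum_squares_bound[of mH mL] by (simp add: power2_eq_square)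
  then have "q*(2*mH*mL) \<le> q*(mH^2 + mL^2)" using assms(6) by (intro mult_left_mono) auto
  ultimately have 3: "-2*q*mH*l \<le> q*(mH^2 + mL^2)" by (simp add: algebra_simps)
  show ?thesis using 2 3 by (simp add: algebra_simps)
qed

lemma maxneg: "max (-h) 0 * h = - ((max (-h) 0)^2)" for h :: real
  by (simp add: max_def power2_eq_square)

lemma nonneg:
  assumes q: "qHL \<ge> 0" "qLH \<ge> 0" and sol: "is_solution (bivirus_field bH bL gH gL qHL qLH) simplex2 x"
    and T: "T \<ge> 0"
  shows "fst (x T) \<ge> 0 \<and> snd (x T) \<ge> 0"
proof -
  define h where "h = (\<lambda>t. fst (x t))"
  define l where "l = (\<lambda>t. snd (x t))"
  define aH where "aH = (\<lambda>t. bH * (1 - h t - l t) - (qHL + gH))"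
  define aL where "aL = (\<lambda>t. bL * (1 - h t - l t) - (qLH + gL))"
  have dh: "(h has_real_derivative aH t * h t + qLH * l t) (at t within {0..})" if "t \<ge> 0" for t
    using sol_comp_deriv(1)[OF sol that] unfolding h_def l_def aH_def by (simp add: algebra_simps)
  have dl: "(l has_real_derivative aL t * l t + qHL * h t) (at t within {0..})" if "t \<ge> 0" for t
    using sol_comp_deriv(2)[OF sol that] unfolding h_def l_def aL_def by (simp add: algebra_simps)
  obtain Rh where Rh: "\<And>t. t\<in>{0..T} \<Longrightarrow> \<bar>h t\<bar> \<le> Rh" using bounded_on_Icc[OF dh, of T] by blast
  obtain Rl where Rl: "\<And>t. t\<in>{0..T} \<Longrightarrow> \<bar>l t\<bar> \<le> Rl" using bounded_on_Icc[OF dl, of T] by blast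
  define K1 where "K1 = \<bar>bH\<bar> * (1 + Rh + Rl) + \<bar>qHL + gH\<bar>"
  define K2 where "K2 = \<bar>bL\<bar> * (1 + Rh + Rl) + \<bar>qLH + gL\<bar>"
  have aHb: "\<bar>aH t\<bar> \<le> K1" if "t \<in> {0..T}" for t
  proof -
    have "\<bar>1 - h t - l t\<bar> \<le> 1 + Rh + Rl" using Rh[OF that] Rl[OF that] by linarith
    then have "\<bar>bH\<bar> * \<bar>1 - h t - l t\<bar> \<le> \<bar>bH\<bar> * (1 + Rh + Rl)" by (intro mult_left_mono) auto
    moreover have "\<bar>aH t\<bar> \<le> \<bar>bH\<bar> * \<bar>1 - h t - l t\<bar> + \<bar>qHL + gH\<bar>"
      unfolding aH_def using abs_triangle_ineq4[of "bH * (1 - h t - l t)" "qHL + gH"] by (simp add: abs_mult)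
    ultimately show ?thesis unfolding K1_def by linarith
  qed
  have aLb: "\<bar>aL t\<bar> \<le> K2" if "t \<in> {0..T}" for t
  proof -
    have "\<bar>1 - h t - l t\<bar> \<le> 1 + Rh + Rl" using Rh[OF that] Rl[OF that] by linarith
    then have "\<bar>bL\<bar> * \<bar>1 - h t - l t\<bar> \<le> \<bar>bL\<bar> * (1 + Rh + Rl)" by (intro mult_left_mono) auto
    moreover have "\<bar>aL t\<bar> \<le> \<bar>bL\<bar> * \<bar>1 - h t - l t\<bar> + \<bar>qLH + gL\<bar>"
      unfolding aL_def using abs_triangle_ineq4[of "bL * (1 - h t - l t)" "qLH + gL"] by (simp add: abs_mult)
    ultimately show ?thesis unfolding K2_def by linarith
  qed
  have "Rh \<ge> 0" "Rl \<ge> 0" using Rh[of 0] Rl[of 0] T by auto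
  then have K1: "K1 \<ge> 0" and K2: "K2 \<ge> 0" unfolding K1_def K2_def by simp_all
  define K where "K = 2*K1 + 2*K2 + qLH + qHL"
  define mH where "mH = (\<lambda>t. max (- h t) 0)"
  define mL where "mL = (\<lambda>t. max (- l t) 0)"
  define \<phi> where "\<phi> = (\<lambda>t. (mH t)^2 + (mL t)^2)"
  define \<psi> where "\<psi> = (\<lambda>t. exp (-K*t) * \<phi> t)"
  define \<phi>' where "\<phi>' = (\<lambda>t. 2 * mH t * (-(aH t * h t + qLH * l t)) + 2 * mL t * (-(aL t * l t + qHL * h t)))"
  have dphi: "(\<phi> has_real_derivative \<phi>' t) (at t within {0..})" if "t \<ge> 0" for t
  proof -
    have a: "((\<lambda>t. - h t) has_real_derivative -(aH t * h t + qLH * l t)) (at t within {0..})"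
      using dh[OF that] by (auto intro!: derivative_eq_intros)
    have b: "((\<lambda>t. - l t) has_real_derivative -(aL t * l t + qHL * h t)) (at t within {0..})"
      using dl[OF that] by (auto intro!: derivative_eq_intros)
    have "((\<lambda>t. (max (- h t) 0)^2 + (max (- l t) 0)^2) has_real_derivative \<phi>' t) (at t within {0..})"
      unfolding \<phi>'_def mH_def mL_def
      by (intro DERIV_add DERIV_chain2[OF DERIV_maxsq a] DERIV_chain2[OF DERIV_maxsq b])
    then show ?thesis unfolding \<phi>_def mH_def mL_def .
  qed
  have phi'_le: "\<phi>' t \<le> K * \<phi> t" if "t \<in> {0..T}" for t
  proof -
    have i1: "2 * mH t * (-(aH t * h t + qLH * l t)) \<le> 2*K1*(mH t)^2 + qLH*((mH t)^2 + (mL t)^2)"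
      by (rule key_ineq) (use aHb[OF that] q in \<open>auto simp: mH_def mL_def maxneg\<close>)
    have i2: "2 * mL t * (-(aL t * l t + qHL * h t)) \<le> 2*K2*(mL t)^2 + qHL*((mL t)^2 + (mH t)^2)"
      by (rule key_ineq) (use aLb[OF that] q in \<open>auto simp: mH_def mL_def maxneg\<close>)
    have "2*K1*(mH t)^2 \<le> 2*K1*((mH t)^2 + (mL t)^2)" using K1 by (intro mult_left_mono) auto
    moreover have "2*K2*(mL t)^2 \<le> 2*K2*((mH t)^2 + (mL t)^2)" using K2 by (intro mult_left_mono) auto
    ultimately show ?thesis using i1 i2 unfolding \<phi>'_def \<phi>_def K_def by (simp add: algebra_simps)
  qed
  have "\<psi> T \<le> \<psi> 0"
  proof (rule mono_deriv[of 0 T \<psi> "\<lambda>t. exp (-K*t) * (\<phi>' t - K * \<phi> t)"])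
    fix t assume t: "t \<in> {0..T}"
    show "(\<psi> has_real_derivative exp (-K*t) * (\<phi>' t - K * \<phi> t)) (at t within {0..})"
    proof -
      have e: "((\<lambda>t. exp (-K*t)) has_real_derivative exp (-K*t) * (-K)) (at t within {0..})"
        by (auto intro!: derivative_eq_intros)
      have "(\<psi> has_real_derivative exp (-K*t) * (-K) * \<phi> t + \<phi>' t * exp (-K*t)) (at t within {0..})"
        unfolding \<psi>_def using DERIV_mult[OF e dphi[of t]] t by simp
      moreover have "exp (-K*t) * (-K) * \<phi> t + \<phi>' t * exp (-K*t) = exp (-K*t) * (\<phi>' t - K * \<phi> t)"
        by (simp add: algebra_simps)
      ultimately show ?thesis by simp
    qed
    show "exp (-K*t) * (\<phi>' t - K * \<phi> t) \<le> 0"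
      using phi'_le[OF t] by (simp add: mult_nonneg_nonpos)
  qed (use T in auto)
  moreover have "\<psi> 0 = 0"
  proof -
    have "x 0 \<in> simplex2" using sol unfolding is_solution_def by simp
    then have "h 0 \<ge> 0" "l 0 \<ge> 0" unfolding simplex2_def h_def l_def by auto
    then show ?thesis unfolding \<psi>_def \<phi>_def mH_def mL_def by simp
  qed
  ultimately have "\<phi> T \<le> 0" unfolding \<psi>_def by (simp add: mult_le_0_iff)
  moreover have "(mH T)^2 \<ge> 0" "(mL T)^2 \<ge> 0" by simp_all
  ultimately have "(mH T)^2 = 0" "(mL T)^2 = 0" unfolding \<phi>_def by linarith+
  then have "mH T = 0" "mL T = 0" by simp_all
  then show ?thesis unfolding mH_def mL_def h_def l_def by (auto simp: max_def split: if_splits)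
qed



lemma norm_pair_le: "norm (p :: real \<times> real) \<le> \<bar>fst p\<bar> + \<bar>snd p\<bar>"
  by (cases p) (simp add: norm_Pair sqrt_sum_squares_le_sum_abs)

lemma gas_intro:
  fixes f :: "real \<times> real \<Rightarrow> real \<times> real"
  assumes "(0,0) \<in> X" "f (0,0) = (0,0)"
    and nn: "\<And>x t. is_solution f X x \<Longrightarrow> t \<ge> 0 \<Longrightarrow> fst (x t) \<ge> 0 \<and> snd (x t) \<ge> 0"
    and stab: "\<And>\<epsilon>. \<epsilon> > 0 \<Longrightarrow> \<exists>\<delta>>0. \<forall>x. is_solution f X x \<and> fst (x 0) < \<delta> \<and> snd (x 0) < \<delta> \<longrightarrow>
                 (\<forall>t\<ge>0. fst (x t) + snd (x t) < \<epsilon>)"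
    and conv: "\<And>x. is_solution f X x \<Longrightarrow> ((\<lambda>t. fst (x t)) \<longlongrightarrow> 0) at_top \<and> ((\<lambda>t. snd (x t)) \<longlongrightarrow> 0) at_top"
  shows "globally_asymptotically_stable f X (0,0)"
  unfolding globally_asymptotically_stable_def
proof (intro conjI allI impI)
  show "(0,0) \<in> X" "f (0,0) = 0" using assms(1,2) by (simp_all add: zero_prod_def)
next
  fix \<epsilon> :: real assume e: "\<epsilon> > 0"
  obtain \<delta> where d: "\<delta> > 0" "\<forall>x. is_solution f X x \<and> fst (x 0) < \<delta> \<and> snd (x 0) < \<delta> \<longrightarrow>
                 (\<forall>t\<ge>0. fst (x t) + snd (x t) < \<epsilon>)" using stab[OF e] by blast
  show "\<exists>\<delta>>0. \<forall>x. is_solution f X x \<and> dist (x 0) (0,0) < \<delta> \<longrightarrow> (\<forall>t\<ge>0. dist (x t) (0,0) < \<epsilon>)"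
  proof (intro exI[of _ \<delta>] conjI allI impI)
    fix x t assume h: "is_solution f X x \<and> dist (x 0) (0,0) < \<delta>" and t: "0 \<le> (t::real)"
    have "\<bar>fst (x 0)\<bar> \<le> norm (x 0)" "\<bar>snd (x 0)\<bar> \<le> norm (x 0)"
      using norm_fst_le[of "fst (x 0)" "snd (x 0)"] norm_snd_le[of "snd (x 0)" "fst (x 0)"] by auto
    moreover have "norm (x 0) < \<delta>" using h by (simp add: dist_norm zero_prod_def[symmetric])
    ultimately have "fst (x 0) < \<delta>" "snd (x 0) < \<delta>" by linarith+
    then have "fst (x t) + snd (x t) < \<epsilon>" using d h t by blast
    moreover have "norm (x t) \<le> \<bar>fst (x t)\<bar> + \<bar>snd (x t)\<bar>" by (rule norm_pair_le)
    moreover have "fst (x t) \<ge> 0 \<and> snd (x t) \<ge> 0" using nn h t by blast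
    ultimately show "dist (x t) (0,0) < \<epsilon>" by (simp add: dist_norm zero_prod_def[symmetric])
  qed (use d in auto)
next
  fix x assume h: "is_solution f X x"
  have "((\<lambda>t. (fst (x t), snd (x t))) \<longlongrightarrow> (0,0)) at_top"
    using conv[OF h] by (intro tendsto_Pair) auto
  then show "(x \<longlongrightarrow> (0,0)) at_top" by simp
qed



lemma nd_alg:
  fixes bH bL gH gL qHL qLH h l v1 v2 :: real
  defines "a \<equiv> gH + qHL - bH" and "b \<equiv> gL + qLH - bL"
  assumes h: "h \<ge> 0" "l \<ge> 0" and bpos: "bH > 0" "bL > 0"
    and det: "qLH*qHL \<le> a*b" and v: "v1 = b + qHL" "v2 = a + qLH" "v1 > 0" "v2 > 0"
  defines "m \<equiv> min (v1*bH) (v2*bL)" and "Mx \<equiv> max v1 v2"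
  shows "v1*(bH * h * (1 - h - l) + qLH * l - (qHL + gH) * h) + v2*(bL * l * (1 - h - l) + qHL * h - (qLH + gL) * l)
     \<le> - (m / Mx^2) * (v1*h + v2*l)^2"
proof -
  define s where "s = h + l"
  have "v1*(bH * h * (1 - h - l) + qLH * l - (qHL + gH) * h) + v2*(bL * l * (1 - h - l) + qHL * h - (qLH + gL) * l)
      = (h + l)*(qLH*qHL - a*b) - s*(v1*bH*h + v2*bL*l)"
    unfolding s_def a_def b_def v by (simp add: algebra_simps)
  also have "\<dots> \<le> - s*(v1*bH*h + v2*bL*l)"
    using det h by (simp add: mult_nonneg_nonpos)
  also have "\<dots> \<le> - s*(m* s)"
  proof -
    have "m*h \<le> v1*bH*h" "m*l \<le> v2*bL*l" unfolding m_def using h by (simp_all add: mult_right_mono)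
    then have "m* s \<le> v1*bH*h + v2*bL*l" unfolding s_def by (simp add: algebra_simps)
    moreover have "s \<ge> 0" unfolding s_def using h by simp
    ultimately show ?thesis by (simp add: mult_left_mono)
  qed
  also have "\<dots> \<le> - (m / Mx^2) * (v1*h + v2*l)^2"
  proof -
    have Mx0: "Mx > 0" unfolding Mx_def using v by simp
    have m0: "m > 0" unfolding m_def using v bpos by simp
    have "v1*h \<le> Mx*h" "v2*l \<le> Mx*l" unfolding Mx_def using h by (simp_all add: mult_right_mono)
    then have "v1*h + v2*l \<le> Mx* s" unfolding s_def by (simp add: algebra_simps)
    moreover have "0 \<le> v1*h + v2*l" using h v by simp
    ultimately have "(v1*h + v2*l)^2 \<le> (Mx* s)^2" by (intro power_mono) auto
    then have "(m / Mx^2) * (v1*h + v2*l)^2 \<le> (m / Mx^2) * (Mx* s)^2"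
      using m0 Mx0 by (intro mult_left_mono) auto
    also have "\<dots> = m * s^2" using Mx0 by (simp add: power_mult_distrib)
    finally show ?thesis by (simp add: power2_eq_square algebra_simps)
  qed
  finally show ?thesis .
qed

lemma nd_case:
  fixes bH bL gH gL qHL qLH :: real
  defines "a \<equiv> gH + qHL - bH" and "b \<equiv> gL + qLH - bL"
  defines "F \<equiv> bivirus_field bH bL gH gL qHL qLH"
  assumes pos: "bH > 0" "bL > 0" "qHL \<ge> 0" "qLH \<ge> 0"
    and det: "qLH*qHL \<le> a*b" and v: "b + qHL > 0" "a + qLH > 0"
  shows "\<exists>C>0. \<forall>x. is_solution F simplex2 x \<longrightarrow>
      (\<forall>t\<ge>0. fst (x t) + snd (x t) \<le> C * (fst (x 0) + snd (x 0)))
      \<and> ((\<lambda>t. fst (x t)) \<longlongrightarrow> 0) at_top \<and> ((\<lambda>t. snd (x t)) \<longlongrightarrow> 0) at_top"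
proof -
  define v1 where "v1 = b + qHL"
  define v2 where "v2 = a + qLH"
  define m where "m = min (v1*bH) (v2*bL)"
  define Mx where "Mx = max v1 v2"
  define mn where "mn = min v1 v2"
  have v0: "v1 > 0" "v2 > 0" using v unfolding v1_def v2_def by auto
  have Mx0: "Mx > 0" and mn0: "mn > 0" and m0: "m > 0" unfolding Mx_def mn_def m_def using v0 pos by auto
  define c where "c = m / Mx^2"
  have c0: "c > 0" unfolding c_def using m0 Mx0 by simp
  show ?thesis
  proof (intro exI[of _ "Mx/mn"] conjI allI impI)
    show "Mx/mn > 0" using Mx0 mn0 by simp
    fix x assume sol: "is_solution F simplex2 x"
    define h where "h = (\<lambda>t. fst (x t))"
    define l where "l = (\<lambda>t. snd (x t))"
    define V where "V = (\<lambda>t. v1 * h t + v2 * l t)"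
    define V' where "V' = (\<lambda>t. v1*(bH * h t * (1 - h t - l t) + qLH * l t - (qHL + gH) * h t)
        + v2*(bL * l t * (1 - h t - l t) + qHL * h t - (qLH + gL) * l t))"
    have nn: "h t \<ge> 0" "l t \<ge> 0" if "t \<ge> 0" for t
      using nonneg[OF pos(3,4) sol[unfolded F_def] that] unfolding h_def l_def by auto
    have dV: "(V has_real_derivative V' t) (at t within {0..})" if "t \<ge> 0" for t
      unfolding V_def V'_def h_def l_def
      using sol_comp_deriv[OF sol[unfolded F_def] that]
      by (intro DERIV_add DERIV_cmult) auto
    have V'le: "V' t \<le> -c*(V t)^2 + (\<lambda>_. 0) t" if "t \<ge> 0" for t
      using nd_alg[of "h t" "l t" bH bL qLH qHL gH gL v1 v2] nn[OF that] pos det v0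
      unfolding V'_def V_def c_def m_def Mx_def v1_def v2_def a_def b_def by simp
    have Vnn: "V t \<ge> 0" if "t \<ge> 0" for t unfolding V_def using nn[OF that] v0 by simp
    have Vb: "V t \<le> V 0" if "t \<ge> 0" for t
      by (rule decay_bound[OF c0 dV V'le, of 0 t "V 0"]) (use that Vnn[of 0] c0 in auto)
    have Vlim: "(V \<longlongrightarrow> 0) at_top"
      by (rule decay_lim[OF c0 dV V'le]) (use Vnn in auto)
    have hl: "mn * (h t + l t) \<le> V t" if "t \<ge> 0" for t
    proof -
      have "mn * h t \<le> v1 * h t" "mn * l t \<le> v2 * l t" unfolding mn_def using nn[OF that]
        by (simp_all add: mult_right_mono)
      then show ?thesis unfolding V_def by (simp add: algebra_simps)
    qed
    have V0: "V 0 \<le> Mx * (h 0 + l 0)"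
    proof -
      have "v1 * h 0 \<le> Mx * h 0" "v2 * l 0 \<le> Mx * l 0" unfolding Mx_def using nn[of 0]
        by (simp_all add: mult_right_mono)
      then show ?thesis unfolding V_def by (simp add: algebra_simps)
    qed
    show "fst (x t) + snd (x t) \<le> Mx / mn * (fst (x 0) + snd (x 0))" if t: "t \<ge> 0" for t
    proof -
      have "mn * (h t + l t) \<le> Mx * (h 0 + l 0)" using hl[OF t] Vb[OF t] V0 by linarith
      then have "h t + l t \<le> Mx * (h 0 + l 0) / mn" using mn0 by (simp add: pos_le_divide_eq mult.commute)
      then show "fst (x t) + snd (x t) \<le> Mx / mn * (fst (x 0) + snd (x 0))" unfolding h_def l_def by simp
    qed
    have lim0: "((\<lambda>t. V t / mn) \<longlongrightarrow> 0) at_top" using tendsto_divide[OF Vlim tendsto_const[of mn]] mn0 by simp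
    have ev: "\<forall>\<^sub>F t in at_top. h t \<le> V t / mn \<and> l t \<le> V t / mn \<and> 0 \<le> h t \<and> 0 \<le> l t"
      unfolding eventually_at_top_linorder
    proof (intro exI[of _ 0] allI impI)
      fix t :: real assume t: "t \<ge> 0"
      have "h t + l t \<le> V t / mn" using hl[OF t] mn0 by (simp add: pos_le_divide_eq mult.commute)
      then show "h t \<le> V t / mn \<and> l t \<le> V t / mn \<and> 0 \<le> h t \<and> 0 \<le> l t" using nn[OF t] by auto
    qed
    have "(h \<longlongrightarrow> 0) at_top"
      by (rule tendsto_sandwich[OF _ _ tendsto_const lim0]) (use ev in \<open>auto elim: eventually_mono\<close>)
    then show "((\<lambda>t. fst (x t)) \<longlongrightarrow> 0) at_top" unfolding h_def .
    have "(l \<longlongrightarrow> 0) at_top"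
      by (rule tendsto_sandwich[OF _ _ tendsto_const lim0]) (use ev in \<open>auto elim: eventually_mono\<close>)
    then show "((\<lambda>t. snd (x t)) \<longlongrightarrow> 0) at_top" unfolding l_def .
  qed
qed



lemma dg_case:
  fixes bH bL gH gL qHL qLH :: real
  defines "F \<equiv> bivirus_field bH bL gH gL qHL qLH"
  assumes pos: "bH > 0" "bL > 0" "qHL \<ge> 0" "qLH = 0"
    and a0: "gH + qHL = bH" and b0: "bL \<le> gL"
  shows "(\<forall>\<epsilon>>0. \<exists>\<delta>>0. \<forall>x. is_solution F simplex2 x \<and> fst (x 0) < \<delta> \<and> snd (x 0) < \<delta> \<longrightarrow>
                 (\<forall>t\<ge>0. fst (x t) + snd (x t) < \<epsilon>))
     \<and> (\<forall>x. is_solution F simplex2 x \<longrightarrow>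
         ((\<lambda>t. fst (x t)) \<longlongrightarrow> 0) at_top \<and> ((\<lambda>t. snd (x t)) \<longlongrightarrow> 0) at_top)"
proof -
  have main: "(\<forall>t\<ge>0. fst (x t) \<le> fst (x 0)) \<and>
      (\<forall>t K. 0 \<le> t \<longrightarrow> snd (x 0) \<le> K \<longrightarrow> qHL * fst (x 0) \<le> bL * K^2 \<longrightarrow> 0 \<le> K \<longrightarrow> snd (x t) \<le> K) \<and>
      ((\<lambda>t. fst (x t)) \<longlongrightarrow> 0) at_top \<and> ((\<lambda>t. snd (x t)) \<longlongrightarrow> 0) at_top
      \<and> (\<forall>t\<ge>0. fst (x t) \<ge> 0 \<and> snd (x t) \<ge> 0)"
    if sol: "is_solution F simplex2 x" for x
  proof -
    define h where "h = (\<lambda>t. fst (x t))"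
    define l where "l = (\<lambda>t. snd (x t))"
    have nn: "h t \<ge> 0" "l t \<ge> 0" if "t \<ge> 0" for t
      using nonneg[OF pos(3) _ sol[unfolded F_def] that] pos(4) unfolding h_def l_def by auto
    define h' where "h' = (\<lambda>t. bH * h t * (1 - h t - l t) + qLH * l t - (qHL + gH) * h t)"
    define l' where "l' = (\<lambda>t. bL * l t * (1 - h t - l t) + qHL * h t - (qLH + gL) * l t)"
    have dh: "(h has_real_derivative h' t) (at t within {0..})" if "t \<ge> 0" for t
      using sol_comp_deriv(1)[OF sol[unfolded F_def] that] unfolding h_def l_def h'_def .
    have dl: "(l has_real_derivative l' t) (at t within {0..})" if "t \<ge> 0" for t
      using sol_comp_deriv(2)[OF sol[unfolded F_def] that] unfolding h_def l_def l'_def .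
    have h'le: "h' t \<le> -bH*(h t)^2 + (\<lambda>_. 0) t" if "t \<ge> 0" for t
    proof -
      have "h' t = - bH * (h t)^2 - bH * (h t * l t)"
        unfolding h'_def using a0 pos(4) by (simp add: algebra_simps power2_eq_square)
      moreover have "bH * (h t * l t) \<ge> 0" using nn[OF that] pos by simp
      ultimately show ?thesis by simp
    qed
    have l'le: "l' t \<le> -bL*(l t)^2 + qHL * h t" if "t \<ge> 0" for t
    proof -
      have "l' t = -bL*(l t)^2 + qHL * h t - ((gL - bL) * l t + bL * (h t * l t))"
        unfolding l'_def using pos(4) by (simp add: algebra_simps power2_eq_square)
      moreover have "(gL - bL) * l t \<ge> 0" "bL * (h t * l t) \<ge> 0" using nn[OF that] pos b0 by simp_all
      ultimately show ?thesis by simp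
    qed
    have hmono: "h t \<le> h s" if "0 \<le> s" "s \<le> t" for s t
      by (rule decay_bound[OF pos(1) dh h'le, of s t "h s"]) (use that nn[of s] pos in auto)
    have hlim: "(h \<longlongrightarrow> 0) at_top"
      by (rule decay_lim[OF pos(1) dh h'le]) (use nn in auto)
    have gmono: "qHL * h t \<le> qHL * h s" if "0 \<le> s" "s \<le> t" for s t
      using hmono[OF that] pos(3) by (simp add: mult_left_mono)
    have llim: "(l \<longlongrightarrow> 0) at_top"
      by (rule decay_lim[OF pos(2) dl l'le gmono]) (use nn tendsto_mult_right_zero[OF hlim] in auto)
    have lb: "l t \<le> K" if "0 \<le> t" "l 0 \<le> K" "qHL * h 0 \<le> bL * K^2" "0 \<le> K" for t K
      by (rule decay_bound[OF pos(2) dl l'le gmono, of 0 t K]) (use that in auto)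
    show ?thesis using hmono[of 0] lb hlim llim nn unfolding h_def l_def by auto
  qed
  show ?thesis
  proof (intro conjI allI impI)
    fix \<epsilon> :: real assume e: "\<epsilon> > 0"
    define K where "K = \<epsilon>/3"
    define \<delta> where "\<delta> = min K (bL * K^2 / (qHL + 1))"
    have K0: "K > 0" unfolding K_def using e by simp
    have d0: "\<delta> > 0" unfolding \<delta>_def using K0 pos by simp
    have dq: "qHL * \<delta> \<le> bL * K^2"
    proof -
      have "qHL * \<delta> \<le> (qHL + 1) * \<delta>" using d0 by (simp add: algebra_simps)
      also have "\<dots> \<le> (qHL + 1) * (bL * K^2 / (qHL + 1))" unfolding \<delta>_def using pos
        by (intro mult_left_mono) auto
      also have "\<dots> = bL * K^2" using pos by simp
      finally show ?thesis .
    qed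
    show "\<exists>\<delta>>0. \<forall>x. is_solution F simplex2 x \<and> fst (x 0) < \<delta> \<and> snd (x 0) < \<delta> \<longrightarrow>
                 (\<forall>t\<ge>0. fst (x t) + snd (x t) < \<epsilon>)"
    proof (intro exI[of _ \<delta>] conjI allI impI)
      fix x t assume h: "is_solution F simplex2 x \<and> fst (x 0) < \<delta> \<and> snd (x 0) < \<delta>" and t: "0 \<le> (t::real)"
      note M = main[of x]
      have h0: "fst (x 0) \<ge> 0" using M h by auto
      have "fst (x t) \<le> fst (x 0)" using M h t by auto
      then have 1: "fst (x t) < K" using h unfolding \<delta>_def by auto
      have "qHL * fst (x 0) \<le> qHL * \<delta>" using h pos by (simp add: mult_left_mono)
      then have "qHL * fst (x 0) \<le> bL * K^2" using dq by linarith
      moreover have "snd (x 0) \<le> K" using h unfolding \<delta>_def by auto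
      ultimately have 2: "snd (x t) \<le> K" using M h t K0 by auto
      show "fst (x t) + snd (x t) < \<epsilon>" using 1 2 e unfolding K_def by simp
    qed (use d0 in auto)
  next
    fix x assume "is_solution F simplex2 x"
    then show "((\<lambda>t. fst (x t)) \<longlongrightarrow> 0) at_top" "((\<lambda>t. snd (x t)) \<longlongrightarrow> 0) at_top"
      using main by auto
  qed
qed



theorem theorem1:
  fixes bH bL gH gL qHL qLH \<alpha> zS :: real
  assumes "bH > 0" "bL > 0" "gH > 0" "gL > 0"
    and "bH / gH > bL / gL" and "bH > bL"
    and "qHL \<ge> 0" "qLH \<ge> 0"
    and "0 < \<alpha>" "\<alpha> < 1"
    and "0 \<le> zS" "zS \<le> 1"
  defines "bH' \<equiv> bH * (\<alpha> * zS + 1 - zS)"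
    and "bL' \<equiv> bL * (\<alpha> * zS + 1 - zS)"
  defines "B \<equiv> diag2 bH' bL'"
    and "D \<equiv> diag2 (gH + qHL) (gL + qLH)"
    and "M \<equiv> offdiag2 qLH qHL"
  shows "globally_asymptotically_stable (bivirus_field bH' bL' gH gL qHL qLH) simplex2 (0, 0)
     \<longleftrightarrow> spectral_radius (matrix_inv D ** (B + M)) \<le> 1"
proof -
  define k where "k = \<alpha> * zS + 1 - zS"
  have "\<alpha> * zS \<ge> 0" using assms by simp
  moreover have "zS \<le> 1" using assms by simp
  moreover have "\<alpha> * zS > 0 \<or> zS < 1" using assms by (cases "zS = 0") auto
  ultimately have k0: "k > 0" unfolding k_def by linarith
  have bp: "bH' > 0" "bL' > 0" unfolding bH'_def bL'_def k_def[symmetric] using k0 assms by simp_all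
  have ratio: "bH' / gH > bL' / gL"
  proof -
    have "k * (bL / gL) < k * (bH / gH)" by (rule mult_strict_left_mono[OF assms(5) k0])
    moreover have "bH'/gH = k*(bH/gH)" "bL'/gL = k*(bL/gL)"
      unfolding bH'_def bL'_def k_def[symmetric] by (simp_all add: mult.commute)
    ultimately show ?thesis by (simp only:)
  qed
  define F where "F = bivirus_field bH' bL' gH gL qHL qLH"
  define P where "P = (bH' \<le> gH + qHL \<and> bL' \<le> gL + qLH \<and> qLH*qHL \<le> ((gH + qHL) - bH')*((gL + qLH) - bL'))"
  have specr: "spectral_radius (matrix_inv D ** (B + M)) \<le> 1 \<longleftrightarrow> P"
    unfolding P_def D_def B_def M_def using assms bp
    by (intro specrad_cond) auto
  have "globally_asymptotically_stable F simplex2 (0, 0) \<longleftrightarrow> P"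
  proof
    assume gas: "globally_asymptotically_stable F simplex2 (0, 0)"
    show P
    proof (rule ccontr)
      assume "\<not> P"
      then obtain e where e: "e \<in> simplex2" "e \<noteq> (0,0)" "F e = (0,0)"
        using endemic[of bH' bL' gH gL qHL qLH] bp assms ratio unfolding P_def F_def by auto
      have sol: "is_solution F simplex2 (\<lambda>t. e)"
        unfolding is_solution_def using e by (auto simp: zero_prod_def[symmetric])
      have allc: "\<forall>x. is_solution F simplex2 x \<longrightarrow> (x \<longlongrightarrow> (0,0)) at_top"
        using gas[unfolded globally_asymptotically_stable_def, THEN conjunct2, THEN conjunct2, THEN conjunct2] .
      have "((\<lambda>t::real. e) \<longlongrightarrow> (0,0)) at_top" using spec[OF allc, of "\<lambda>t. e"] sol by (rule mp)
      then have "e = (0,0)" by (simp add: tendsto_const_iff)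
      then show False using e by simp
    qed
  next
    assume P
    define a where "a = gH + qHL - bH'"
    define b where "b = gL + qLH - bL'"
    have ab: "a \<ge> 0" "b \<ge> 0" "qLH*qHL \<le> a*b" using \<open>P\<close> unfolding P_def a_def b_def by auto
    have v1: "b + qHL > 0"
    proof (rule ccontr)
      assume "\<not> b + qHL > 0"
      then have "b = 0" "qHL = 0" using ab assms by auto
      then have "bL' = gL + qLH" "bH' \<le> gH" using \<open>P\<close> unfolding P_def b_def by auto
      then have "bH'/gH \<le> 1" "1 \<le> bL'/gL" using assms by auto
      then show False using ratio by simp
    qed
    show "globally_asymptotically_stable F simplex2 (0, 0)"
    proof (rule gas_intro)
      show "(0,0) \<in> simplex2" unfolding simplex2_def by simp
      show "F (0,0) = (0,0)" unfolding F_def bivirus_field_def by simp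
      show "fst (x t) \<ge> 0 \<and> snd (x t) \<ge> 0" if "is_solution F simplex2 x" "t \<ge> 0" for x t
        using nonneg[OF assms(7,8)] that unfolding F_def by blast
    next
      have "(\<forall>\<epsilon>>0. \<exists>\<delta>>0. \<forall>x. is_solution F simplex2 x \<and> fst (x 0) < \<delta> \<and> snd (x 0) < \<delta> \<longrightarrow>
                 (\<forall>t\<ge>0. fst (x t) + snd (x t) < \<epsilon>))
        \<and> (\<forall>x. is_solution F simplex2 x \<longrightarrow>
         ((\<lambda>t. fst (x t)) \<longlongrightarrow> 0) at_top \<and> ((\<lambda>t. snd (x t)) \<longlongrightarrow> 0) at_top)"
      proof (cases "a + qLH > 0")
        case True
        obtain C where C: "C > 0" "\<forall>x. is_solution F simplex2 x \<longrightarrow>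
          (\<forall>t\<ge>0. fst (x t) + snd (x t) \<le> C * (fst (x 0) + snd (x 0)))
          \<and> ((\<lambda>t. fst (x t)) \<longlongrightarrow> 0) at_top \<and> ((\<lambda>t. snd (x t)) \<longlongrightarrow> 0) at_top"
          using nd_case[where bH=bH' and bL=bL' and gH=gH and gL=gL and qHL=qHL and qLH=qLH] bp assms ab v1 True unfolding a_def b_def F_def by auto
        show ?thesis
        proof (intro conjI allI impI)
          fix \<epsilon> :: real assume e: "\<epsilon> > 0"
          show "\<exists>\<delta>>0. \<forall>x. is_solution F simplex2 x \<and> fst (x 0) < \<delta> \<and> snd (x 0) < \<delta> \<longrightarrow>
                 (\<forall>t\<ge>0. fst (x t) + snd (x t) < \<epsilon>)"
          proof (intro exI[of _ "\<epsilon>/(2*C)"] conjI allI impI)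
            show "\<epsilon>/(2*C) > 0" using e C by simp
            fix x t assume h: "is_solution F simplex2 x \<and> fst (x 0) < \<epsilon>/(2*C) \<and> snd (x 0) < \<epsilon>/(2*C)"
              and t: "(t::real) \<ge> 0"
            have "fst (x t) + snd (x t) \<le> C * (fst (x 0) + snd (x 0))" using C h t by blast
            also have "\<dots> < C * (\<epsilon>/(2*C) + \<epsilon>/(2*C))" using h C by (intro mult_strict_left_mono) auto
            also have "\<dots> = \<epsilon>" using C by (simp add: field_simps)
            finally show "fst (x t) + snd (x t) < \<epsilon>" .
          qed
        next
          fix x assume "is_solution F simplex2 x"
          then show "((\<lambda>t. fst (x t)) \<longlongrightarrow> 0) at_top" "((\<lambda>t. snd (x t)) \<longlongrightarrow> 0) at_top"
            using C by auto
        qed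
      next
        case False
        then have "a = 0" "qLH = 0" using ab assms by auto
        then show ?thesis unfolding F_def
          using dg_case[where bH=bH' and bL=bL' and gH=gH and gL=gL and qHL=qHL and qLH=qLH] bp assms \<open>P\<close> unfolding a_def P_def by auto
      qed
      then show "\<And>\<epsilon>. \<epsilon> > 0 \<Longrightarrow> \<exists>\<delta>>0. \<forall>x. is_solution F simplex2 x \<and> fst (x 0) < \<delta> \<and> snd (x 0) < \<delta> \<longrightarrow>
                 (\<forall>t\<ge>0. fst (x t) + snd (x t) < \<epsilon>)"
        "\<And>x. is_solution F simplex2 x \<Longrightarrow> ((\<lambda>t. fst (x t)) \<longlongrightarrow> 0) at_top \<and> ((\<lambda>t. snd (x t)) \<longlongrightarrow> 0) at_top"
        by auto
    qed
  qed
  then show ?thesis using specr unfolding F_def by simp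
qed

end
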